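(* Let $\alpha>0$ and let $\Lambda=\{\lambda(n)\}_{n\in\mathbb{Z}}$ be a strictly increasing sequence of real numbers such that $\lambda(n)=n+O(|n|^{-\alpha})$ as $|n|\to\infty$. Then $\Lambda$ is not a Menshov spectrum for $\mathbb{R}$.
   Context: A sequence $\Lambda=\{\lambda(k)\}_{k\in\mathbb{Z}}$ of real numbers with $\dots<\lambda(-1)<\lambda(0)<\lambda(1)<\dots$ is called a Menshov spectrum for $\mathbb{R}$ if for every measurable (complex-valued, a.e. finite) function $f$ on $\mathbb{R}$ there are coefficients $\{c(k)\}$ such that $f(t)=\sum_{k\in\mathbb{Z}}c(k)e^{i\lambda(k)t}$ almost everywhere, where convergence of the series is understood as the limit of the symmetric partial sums $\lim_{x\to\infty}\sum_{|\lambda(k)|<x}c(k)e^{i\lambda(k)t}$. *)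

theory Defs
  imports "HOL-Analysis.Analysis"
begin

definition menshov_spectrum :: "(int \<Rightarrow> real) \<Rightarrow> bool" where
  "menshov_spectrum lam \<longleftrightarrow>
     (\<forall>f :: real \<Rightarrow> complex. f \<in> borel_measurable lebesgue \<longrightarrow>
        (\<exists>c :: int \<Rightarrow> complex.
           AE t in lebesgue.
             ((\<lambda>x::real. \<Sum>k\<in>{k. \<bar>lam k\<bar> < x}. c k * exp (\<i> * complex_of_real (lam k * t)))
                \<longlongrightarrow> f t) at_top))"

end

theory Submission imports Defs begin

primrec Dop :: "real \<Rightarrow> nat \<Rightarrow> (real \<Rightarrow> complex) \<Rightarrow> real \<Rightarrow> complex" where
  "Dop a 0 g s = g s"
| "Dop a (Suc j) g s = Dop a j g (s + a) + Dop a j g (s - a) - 2 * Dop a j g s"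

lemma Dop_eigen:
  assumes "\<And>s. g (s + a) + g (s - a) - 2 * g s = \<kappa> * g s"
  shows "Dop a j g s = \<kappa> ^ j * g s"
proof (induction j arbitrary: s)
  case 0 then show ?case by simp
next
  case (Suc j)
  have "Dop a (Suc j) g s = \<kappa> ^ j * (g (s + a) + g (s - a) - 2 * g s)"
    by (simp add: Suc algebra_simps)
  also have "\<dots> = \<kappa> ^ Suc j * g s" using assms by simp
  finally show ?case .
qed

lemma Dop_sum:
  "Dop a j (\<lambda>s. \<Sum>k\<in>F. u k s) s = (\<Sum>k\<in>F. Dop a j (u k) s)"
proof (induction j arbitrary: s)
  case 0 then show ?case by simp
next
  case (Suc j)
  then show ?case by (simp add: sum.distrib sum_subtractf sum_distrib_left)
qed

lemma Dop_tendsto: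
  assumes "\<And>n::int. ((\<lambda>x. G x (t + of_int n * a)) \<longlongrightarrow> g (t + of_int n * a)) F"
  shows "((\<lambda>x. Dop a j (G x) (t + of_int n * a)) \<longlongrightarrow> Dop a j g (t + of_int n * a)) F"
proof (induction j arbitrary: n)
  case 0 then show ?case using assms by simp
next
  case (Suc j)
  have e1: "t + of_int n * a + a = t + of_int (n + 1) * a" by (simp add: algebra_simps)
  have e2: "t + of_int n * a - a = t + of_int (n - 1) * a" by (simp add: algebra_simps)
  show ?case unfolding Dop.simps e1 e2
    by (intro tendsto_intros Suc)
qed

lemma group_sum:
  fixes r :: "'a \<Rightarrow> 'b" and g :: "'a \<Rightarrow> complex"
  assumes "finite F"
  shows "(\<Sum>k\<in>F. g k) = (\<Sum>k\<in>F. (\<Sum>k'\<in>{k'\<in>F. r k' = r k}. g k') / of_nat (card {k'\<in>F. r k' = r k}))"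
proof -
  define G where "G k = {k'\<in>F. r k' = r k}" for k
  have cpos: "card (G k) > 0" if "k \<in> F" for k
    using that assms by (auto simp: G_def card_gt_0_iff)
  have "(\<Sum>k\<in>F. (\<Sum>k'\<in>G k. g k') / of_nat (card (G k)))
      = (\<Sum>k\<in>F. \<Sum>k'\<in>F. (if r k = r k' then g k' / of_nat (card (G k')) else 0))"
  proof (rule sum.cong[OF refl])
    fix k assume "k \<in> F"
    have "(\<Sum>k'\<in>G k. g k') / of_nat (card (G k)) = (\<Sum>k'\<in>G k. g k' / of_nat (card (G k)))"
      by (simp add: sum_divide_distrib)
    also have "\<dots> = (\<Sum>k'\<in>F. (if r k' = r k then g k' / of_nat (card (G k)) else 0))"
      unfolding G_def using assms by (simp add: sum.inter_filter)
    also have "\<dots> = (\<Sum>k'\<in>F. (if r k = r k' then g k' / of_nat (card (G k')) else 0))"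
      by (rule sum.cong) (auto simp: G_def)
    finally show "(\<Sum>k'\<in>G k. g k') / of_nat (card (G k)) = \<dots>" .
  qed
  also have "\<dots> = (\<Sum>k'\<in>F. \<Sum>k\<in>F. (if r k = r k' then g k' / of_nat (card (G k')) else 0))"
    by (rule sum.swap)
  also have "\<dots> = (\<Sum>k'\<in>F. of_nat (card (G k')) * (g k' / of_nat (card (G k'))))"
  proof (rule sum.cong[OF refl])
    fix k' assume "k' \<in> F"
    have "(\<Sum>k\<in>F. (if r k = r k' then g k' / of_nat (card (G k')) else 0))
        = (\<Sum>k\<in>G k'. g k' / of_nat (card (G k')))"
      unfolding G_def by (rule sum.inter_filter[OF assms, symmetric])
    also have "\<dots> = of_nat (card (G k')) * (g k' / of_nat (card (G k')))" by simp
    finally show "(\<Sum>k\<in>F. (if r k = r k' then g k' / of_nat (card (G k')) else 0)) = \<dots>" .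
  qed
  also have "\<dots> = (\<Sum>k'\<in>F. g k')"
    by (rule sum.cong[OF refl]) (use cpos in auto)
  finally show ?thesis unfolding G_def by simp
qed

lemma int_sum_le:
  fixes g :: "nat \<Rightarrow> real"
  assumes "finite F" "\<And>n. 0 \<le> g n" "summable g"
  shows "(\<Sum>k\<in>F. g (nat \<bar>k\<bar>)) \<le> 2 * suminf g"
proof -
  have part: "(\<Sum>k\<in>A. g (nat \<bar>k\<bar>)) \<le> suminf g" if "finite A" "inj_on (\<lambda>k. nat \<bar>k\<bar>) A" for A :: "int set"
  proof -
    have "(\<Sum>k\<in>A. g (nat \<bar>k\<bar>)) = sum g ((\<lambda>k. nat \<bar>k\<bar>) ` A)"
      using that by (simp add: sum.reindex)
    also have "\<dots> \<le> suminf g" using that assms by (intro sum_le_suminf) auto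
    finally show ?thesis .
  qed
  have "F = {k\<in>F. 0 \<le> k} \<union> {k\<in>F. k < 0}" by auto
  then have "(\<Sum>k\<in>F. g (nat \<bar>k\<bar>)) = (\<Sum>k\<in>{k\<in>F. 0 \<le> k}. g (nat \<bar>k\<bar>)) + (\<Sum>k\<in>{k\<in>F. k < 0}. g (nat \<bar>k\<bar>))"
    using assms(1) by (metis (no_types, lifting) sum.union_disjoint finite_Un disjoint_iff mem_Collect_eq not_less)
  also have "\<dots> \<le> suminf g + suminf g"
    apply (intro add_mono part)
    using assms(1) by (auto simp: inj_on_def)
  finally show ?thesis by simp
qed

lemma exp_ge_pow_fact:
  fixes a :: real assumes "0 \<le> a"
  shows "a ^ n / fact n \<le> exp a"
proof -
  have s: "summable (\<lambda>n. a ^ n /\<^sub>R fact n)" using exp_converges sums_summable by blast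
  have "(\<Sum>m\<in>{n}. a ^ m /\<^sub>R fact m) \<le> (\<Sum>m. a ^ m /\<^sub>R fact m)"
    by (rule sum_le_suminf[OF s]) (use assms in auto)
  then show ?thesis by (simp add: exp_def divide_inverse mult.commute)
qed

lemma AE_shift:
  assumes "AE t in lebesgue. P t"
  shows "AE t in lebesgue. P (t + c)"
proof -
  from assms obtain N where N: "N \<in> null_sets lebesgue" "{t. \<not> P t} \<subseteq> N"
    unfolding eventually_ae_filter by auto
  have "negligible N" using N negligible_iff_null_sets by blast
  then have "negligible ((+) (-c) ` N)" by (rule negligible_translation)
  moreover have "{t. \<not> P (t + c)} \<subseteq> (+) (-c) ` N"
    using N(2) by (auto simp: image_iff intro!: bexI[where x="_ + c"])
  ultimately show ?thesis unfolding eventually_ae_filter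
    using negligible_iff_null_sets by auto
qed


theorem mainTheorem2:
  fixes \<alpha> :: real and lam :: "int \<Rightarrow> real"
  assumes "\<alpha> > 0"
    and "strict_mono lam"
    and "\<exists>C N. \<forall>n::int. \<bar>n\<bar> \<ge> N \<longrightarrow> \<bar>lam n - real_of_int n\<bar> \<le> C * \<bar>real_of_int n\<bar> powr (- \<alpha>)"
  shows "\<not> menshov_spectrum lam"
proof
  assume M: "menshov_spectrum lam"
  from assms(3) obtain C N where H: "\<And>n::int. \<bar>n\<bar> \<ge> N \<Longrightarrow> \<bar>lam n - real_of_int n\<bar> \<le> C * \<bar>real_of_int n\<bar> powr (- \<alpha>)"
    by blast
  define f where "f s = complex_of_real (exp s)" for s
  have fm: "f \<in> borel_measurable lebesgue"
    unfolding f_def by (intro measurable_completion) simp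
  define F where "F x = {k. \<bar>lam k\<bar> < x}" for x
  define e where "e k s = exp (\<i> * complex_of_real (lam k * s))" for k s
  from M fm obtain c where AE0: "AE t in lebesgue. ((\<lambda>x. \<Sum>k\<in>F x. c k * e k t) \<longlongrightarrow> f t) at_top"
    unfolding menshov_spectrum_def F_def e_def by blast
  define S where "S x s = (\<Sum>k\<in>F x. c k * e k s)" for x s
  define conv where "conv s \<longleftrightarrow> ((\<lambda>x. S x s) \<longlongrightarrow> f s) at_top" for s
  have AE: "AE t in lebesgue. conv t" using AE0 unfolding conv_def S_def .
  have finF: "finite (F x)" for x
  proof -
    define B where "B = max (max N 1) (\<lceil>\<bar>x\<bar> + \<bar>C\<bar>\<rceil>)"
    have "F x \<subseteq> {-B..B}"
    proof
      fix k assume k: "k \<in> F x"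
      show "k \<in> {-B..B}"
      proof (cases "\<bar>k\<bar> \<ge> max N 1")
        case True
        then have k1: "1 \<le> \<bar>real_of_int k\<bar>" by linarith
        have p1: "\<bar>real_of_int k\<bar> powr (- \<alpha>) \<le> 1"
          using ge_one_powr_ge_zero[OF k1, of \<alpha>] assms(1)
          by (simp add: powr_minus divide_simps)
        have p0: "0 \<le> \<bar>real_of_int k\<bar> powr (- \<alpha>)" by simp
        have "\<bar>lam k - real_of_int k\<bar> \<le> C * \<bar>real_of_int k\<bar> powr (- \<alpha>)" using H True by auto
        also have "\<dots> \<le> \<bar>C\<bar> * \<bar>real_of_int k\<bar> powr (- \<alpha>)" using p0 by (intro mult_right_mono) auto
        also have "\<dots> \<le> \<bar>C\<bar>" using p1 by (simp add: mult_left_le)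
        finally have "\<bar>real_of_int k\<bar> < \<bar>x\<bar> + \<bar>C\<bar>" using k unfolding F_def by auto
        then have "\<bar>k\<bar> \<le> \<lceil>\<bar>x\<bar> + \<bar>C\<bar>\<rceil>" by linarith
        then show ?thesis unfolding B_def by auto
      next
        case False
        then show ?thesis unfolding B_def by auto
      qed
    qed
    then show ?thesis by (rule finite_subset) simp
  qed
  have AEall: "AE t in lebesgue. \<forall>n::int. conv (t + 2 * pi * of_int n)"
    unfolding AE_all_countable by (intro allI AE_shift[OF AE])
  have "\<exists>t. \<forall>n::int. conv (t + 2 * pi * of_int n)"
  proof (rule ccontr)
    assume nt: "\<not> ?thesis"
    from AEall obtain Nn where Nn: "Nn \<in> null_sets lebesgue" "{t. \<not> (\<forall>n::int. conv (t + 2 * pi * of_int n))} \<subseteq> Nn"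
      unfolding eventually_ae_filter by auto
    then have "UNIV \<subseteq> Nn" using nt by auto
    moreover have "negligible Nn" using Nn negligible_iff_null_sets by blast
    ultimately have "negligible (UNIV :: real set)" using negligible_subset by blast
    then show False by simp
  qed
  then obtain t where t: "\<And>n::int. conv (t + 2 * pi * of_int n)" by blast
  have ct: "conv t" using t[of 0] by simp
  then have "eventually (\<lambda>x. dist (S x t) (f t) < 1) at_top"
    unfolding conv_def tendsto_iff by simp
  then obtain X where X: "\<And>x. x \<ge> X \<Longrightarrow> dist (S x t) (f t) < 1"
    by (auto simp: eventually_at_top_linorder)
  define R0 where "R0 = norm (f t) + 1 + (\<Sum>k\<in>F X. norm (c k * e k t))"
  have Sb: "norm (S y t) \<le> R0" for y
  proof (cases "y \<ge> X")
    case True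
    have "norm (S y t) \<le> norm (f t) + norm (S y t - f t)" by (metis norm_triangle_sub)
    also have "\<dots> \<le> norm (f t) + 1" using X[OF True] by (simp add: dist_norm)
    also have "\<dots> \<le> R0" unfolding R0_def by (simp add: sum_nonneg)
    finally show ?thesis .
  next
    case False
    have sub: "F y \<subseteq> F X" using False by (auto simp: F_def)
    have "norm (S y t) \<le> (\<Sum>k\<in>F y. norm (c k * e k t))" unfolding S_def by (rule norm_sum)
    also have "\<dots> \<le> (\<Sum>k\<in>F X. norm (c k * e k t))" by (rule sum_mono2[OF finF sub]) auto
    also have "\<dots> \<le> R0" unfolding R0_def by simp
    finally show ?thesis .
  qed
  have R0nn: "0 \<le> R0" using Sb[of 0] norm_ge_zero order_trans by blast
  have Jb: "norm (\<Sum>k'\<in>{k'. \<bar>lam k'\<bar> = \<bar>lam k\<bar>}. c k' * e k' t) \<le> 2 * R0" for k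
  proof -
    define \<mu> where "\<mu> = \<bar>lam k\<bar>"
    define V where "V = (\<lambda>k'. \<bar>lam k'\<bar>) ` {k' \<in> F (\<mu> + 1). \<bar>lam k'\<bar> > \<mu>}"
    have finV: "finite V" using finF unfolding V_def by simp
    define y where "y = Min (insert (\<mu> + 1) V)"
    have ygt: "\<mu> < y" unfolding y_def using finV by (auto simp: V_def)
    have yle: "y \<le> \<mu> + 1" unfolding y_def using finV by simp
    have Fy: "F y = {k'. \<bar>lam k'\<bar> \<le> \<mu>}"
    proof (intro set_eqI iffI)
      fix k' assume "k' \<in> F y"
      then have k': "\<bar>lam k'\<bar> < y" by (simp add: F_def)
      show "k' \<in> {k'. \<bar>lam k'\<bar> \<le> \<mu>}"
      proof (rule ccontr)
        assume "k' \<notin> {k'. \<bar>lam k'\<bar> \<le> \<mu>}"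
        then have "\<bar>lam k'\<bar> \<in> V" using k' yle unfolding V_def F_def by auto
        then have "y \<le> \<bar>lam k'\<bar>" unfolding y_def using finV by simp
        then show False using k' by simp
      qed
    next
      fix k' assume "k' \<in> {k'. \<bar>lam k'\<bar> \<le> \<mu>}"
      then show "k' \<in> F y" using ygt by (simp add: F_def)
    qed
    have eq: "{k'. \<bar>lam k'\<bar> = \<bar>lam k\<bar>} = F y - F \<mu>" using Fy by (auto simp: F_def \<mu>_def)
    have sub: "F \<mu> \<subseteq> F y" using Fy by (auto simp: F_def)
    have "(\<Sum>k'\<in>{k'. \<bar>lam k'\<bar> = \<bar>lam k\<bar>}. c k' * e k' t) = S y t - S \<mu> t"
      unfolding eq S_def by (rule sum_diff[OF finF sub])
    then have "norm (\<Sum>k'\<in>{k'. \<bar>lam k'\<bar> = \<bar>lam k\<bar>}. c k' * e k' t) \<le> norm (S y t) + norm (S \<mu> t)"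
      by (simp add: norm_triangle_ineq4)
    also have "\<dots> \<le> 2 * R0" using Sb[of y] Sb[of \<mu>] by simp
    finally show ?thesis .
  qed

  define J where "J = nat \<lceil>1 / \<alpha>\<rceil>"
  have J1: "1 / \<alpha> \<le> real J" unfolding J_def by linarith
  have "0 < 1 / \<alpha>" using assms(1) by simp
  then have "0 < real J" using J1 by linarith
  then have Jge: "J \<ge> 1" by simp
  have aJ: "1 \<le> \<alpha> * real J" using J1 assms(1) by (simp add: field_simps)
  define g where "g n = (real n powr (- \<alpha>)) ^ (2 * J)" for n :: nat
  have gnn: "0 \<le> g n" for n unfolding g_def by simp
  have geq: "g = (\<lambda>n. real n powr (real (2 * J) * (- \<alpha>)))"
  proof
    fix n show "g n = real n powr (real (2 * J) * (- \<alpha>))"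
    proof (cases "n = 0")
      case True then show ?thesis using Jge unfolding g_def by simp
    next
      case False then show ?thesis unfolding g_def by (subst powr_power) auto
    qed
  qed
  have "real (2 * J) * (- \<alpha>) < -1" using aJ by (simp add: algebra_simps)
  then have gsum: "summable g" unfolding geq summable_real_powr_iff .
  define Z where "Z = suminf g"
  define M0 where "M0 = card {k::int. \<bar>k\<bar> < N}"
  have finN: "finite {k::int. \<bar>k\<bar> < N}"
    by (rule finite_subset[of _ "{-N..N}"]) auto
  have key: "(exp (2*pi*h) + exp (-(2*pi*h)) - 2) ^ J * exp t
      \<le> 2 * R0 * (4 ^ J * M0 + (2*pi*h*\<bar>C\<bar>) ^ (2 * J) * (2 * Z))" if h1: "h \<ge> 1" for h :: nat
  proof -
    define a where "a = 2*pi*h"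
    define \<kappa> where "\<kappa> k = 2 * cos (a * lam k) - 2" for k
    have eig_e: "e k (s + a) + e k (s - a) - 2 * e k s = complex_of_real (\<kappa> k) * e k s" for k s
    proof -
      define w where "w = \<i> * complex_of_real (a * lam k)"
      have e1: "e k (s + a) = e k s * exp w"
        unfolding e_def w_def by (simp add: algebra_simps flip: exp_add)
      have e2: "e k (s - a) = e k s * exp (- w)"
        unfolding e_def w_def by (simp add: algebra_simps flip: exp_add)
      have c0: "complex_of_real (cos (a * lam k)) = (exp w + exp (- w)) / 2"
        unfolding w_def using cos_exp_eq[of "complex_of_real (a * lam k)"] cos_of_real[of "a * lam k"]
        by metis
      have c: "exp w + exp (- w) = 2 * complex_of_real (cos (a * lam k))"
        unfolding c0 by simp
      have "e k (s + a) + e k (s - a) - 2 * e k s = e k s * (exp w + exp (- w) - 2)"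
        unfolding e1 e2 by (simp add: algebra_simps)
      also have "\<dots> = complex_of_real (\<kappa> k) * e k s" unfolding c \<kappa>_def by simp
      finally show ?thesis .
    qed
    have eig_f: "f (s + a) + f (s - a) - 2 * f s = complex_of_real (exp a + exp (- a) - 2) * f s" for s
    proof -
      have "exp (s + a) + exp (s - a) - 2 * exp s = (exp a + exp (- a) - 2) * exp s"
        by (simp add: exp_add exp_diff exp_minus field_simps)
      then have "complex_of_real (exp (s + a) + exp (s - a) - 2 * exp s) = complex_of_real ((exp a + exp (- a) - 2) * exp s)"
        by (rule arg_cong)
      then show ?thesis unfolding f_def by (simp only: of_real_add of_real_diff of_real_mult of_real_numeral)
    qed
    have DS: "Dop a J (S x) t = (\<Sum>k\<in>F x. complex_of_real (\<kappa> k) ^ J * (c k * e k t))" for x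
    proof -
      have "S x = (\<lambda>s. \<Sum>k\<in>F x. c k * e k s)" by (simp add: S_def fun_eq_iff)
      then have "Dop a J (S x) t = (\<Sum>k\<in>F x. Dop a J (\<lambda>s. c k * e k s) t)"
        by (simp add: Dop_sum)
      also have "\<dots> = (\<Sum>k\<in>F x. complex_of_real (\<kappa> k) ^ J * (c k * e k t))"
      proof (rule sum.cong[OF refl])
        fix k
        have "c k * e k (s + a) + c k * e k (s - a) - 2 * (c k * e k s) = complex_of_real (\<kappa> k) * (c k * e k s)" for s
        proof -
          have "c k * e k (s + a) + c k * e k (s - a) - 2 * (c k * e k s) = c k * (e k (s + a) + e k (s - a) - 2 * e k s)"
            by (simp add: algebra_simps)
          then show ?thesis using eig_e[of k s] by simp
        qed
        then show "Dop a J (\<lambda>s. c k * e k s) t = complex_of_real (\<kappa> k) ^ J * (c k * e k t)"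
          by (rule Dop_eigen)
      qed
      finally show ?thesis .
    qed
    have lim: "((\<lambda>x. Dop a J (S x) t) \<longlongrightarrow> Dop a J f t) at_top"
    proof -
      have "((\<lambda>x. S x (t + of_int n * a)) \<longlongrightarrow> f (t + of_int n * a)) at_top" for n :: int
      proof -
        have eq: "t + of_int n * a = t + 2 * pi * of_int (int h * n)" unfolding a_def by simp
        show ?thesis using t[of "int h * n"] unfolding conv_def eq .
      qed
      from Dop_tendsto[of S t a f at_top J 0, OF this] show ?thesis by simp
    qed
    have Df: "Dop a J f t = complex_of_real ((exp a + exp (- a) - 2) ^ J * exp t)"
      using Dop_eigen[of f a "complex_of_real (exp a + exp (- a) - 2)" J t, OF eig_f]
      unfolding f_def by simp
    have kap_abs: "\<bar>\<kappa> k\<bar> \<le> 4" for k unfolding \<kappa>_def using cos_ge_minus_one[of "a * lam k"] cos_le_one[of "a * lam k"] by linarith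
    have kap_sym: "\<kappa> k' = \<kappa> k" if "\<bar>lam k'\<bar> = \<bar>lam k\<bar>" for k k'
    proof -
      have "lam k' = lam k \<or> lam k' = - lam k" using that by linarith
      then show ?thesis unfolding \<kappa>_def by auto
    qed
    have bound: "norm (Dop a J (S x) t) \<le> 2 * R0 * (\<Sum>k\<in>F x. \<bar>\<kappa> k\<bar> ^ J)" for x
    proof -
      define G where "G k = {k'\<in>F x. \<bar>lam k'\<bar> = \<bar>lam k\<bar>}" for k
      have "Dop a J (S x) t = (\<Sum>k\<in>F x. (\<Sum>k'\<in>G k. complex_of_real (\<kappa> k') ^ J * (c k' * e k' t)) / of_nat (card (G k)))"
        unfolding DS G_def by (rule group_sum[OF finF])
      also have "\<dots> = (\<Sum>k\<in>F x. complex_of_real (\<kappa> k) ^ J * (\<Sum>k'\<in>{k'. \<bar>lam k'\<bar> = \<bar>lam k\<bar>}. c k' * e k' t) / of_nat (card (G k)))"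
      proof (rule sum.cong[OF refl])
        fix k assume k: "k \<in> F x"
        have Gk: "G k = {k'. \<bar>lam k'\<bar> = \<bar>lam k\<bar>}" using k unfolding G_def F_def by auto
        have "(\<Sum>k'\<in>G k. complex_of_real (\<kappa> k') ^ J * (c k' * e k' t)) = (\<Sum>k'\<in>G k. complex_of_real (\<kappa> k) ^ J * (c k' * e k' t))"
        proof (rule sum.cong[OF refl])
          fix k' assume "k' \<in> G k"
          then have "\<kappa> k' = \<kappa> k" unfolding G_def by (intro kap_sym) simp
          then show "complex_of_real (\<kappa> k') ^ J * (c k' * e k' t) = complex_of_real (\<kappa> k) ^ J * (c k' * e k' t)" by simp
        qed
        also have "\<dots> = complex_of_real (\<kappa> k) ^ J * (\<Sum>k'\<in>{k'. \<bar>lam k'\<bar> = \<bar>lam k\<bar>}. c k' * e k' t)"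
          unfolding Gk by (simp add: sum_distrib_left)
        finally show "(\<Sum>k'\<in>G k. complex_of_real (\<kappa> k') ^ J * (c k' * e k' t)) / of_nat (card (G k)) = complex_of_real (\<kappa> k) ^ J * (\<Sum>k'\<in>{k'. \<bar>lam k'\<bar> = \<bar>lam k\<bar>}. c k' * e k' t) / of_nat (card (G k))"
          by simp
      qed
      finally have eq: "Dop a J (S x) t = \<dots>" .
      have "norm (Dop a J (S x) t) \<le> (\<Sum>k\<in>F x. norm (complex_of_real (\<kappa> k) ^ J * (\<Sum>k'\<in>{k'. \<bar>lam k'\<bar> = \<bar>lam k\<bar>}. c k' * e k' t) / of_nat (card (G k))))"
        unfolding eq by (rule norm_sum)
      also have "\<dots> \<le> (\<Sum>k\<in>F x. \<bar>\<kappa> k\<bar> ^ J * (2 * R0))"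
      proof (rule sum_mono)
        fix k assume k: "k \<in> F x"
        have "k \<in> G k" using k unfolding G_def by simp
        moreover have "finite (G k)" using finF[of x] unfolding G_def by simp
        ultimately have cpos: "card (G k) > 0" using card_gt_0_iff by blast
        then have cg: "1 \<le> real (card (G k))" by simp
        have "norm (complex_of_real (\<kappa> k) ^ J * (\<Sum>k'\<in>{k'. \<bar>lam k'\<bar> = \<bar>lam k\<bar>}. c k' * e k' t) / of_nat (card (G k)))
            = \<bar>\<kappa> k\<bar> ^ J * norm (\<Sum>k'\<in>{k'. \<bar>lam k'\<bar> = \<bar>lam k\<bar>}. c k' * e k' t) / real (card (G k))"
          by (simp add: norm_mult norm_divide norm_power)
        also have "\<dots> \<le> \<bar>\<kappa> k\<bar> ^ J * norm (\<Sum>k'\<in>{k'. \<bar>lam k'\<bar> = \<bar>lam k\<bar>}. c k' * e k' t)"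
          by (rule order_trans[OF divide_left_mono[OF cg]]) (use cpos in auto)
        also have "\<dots> \<le> \<bar>\<kappa> k\<bar> ^ J * (2 * R0)" using Jb[of k] by (intro mult_left_mono) auto
        finally show "norm (complex_of_real (\<kappa> k) ^ J * (\<Sum>k'\<in>{k'. \<bar>lam k'\<bar> = \<bar>lam k\<bar>}. c k' * e k' t) / of_nat (card (G k))) \<le> \<bar>\<kappa> k\<bar> ^ J * (2 * R0)" .
      qed
      also have "\<dots> = 2 * R0 * (\<Sum>k\<in>F x. \<bar>\<kappa> k\<bar> ^ J)" by (simp add: sum_distrib_left mult_ac)
      finally show ?thesis .
    qed
    have kb: "\<bar>\<kappa> k\<bar> ^ J \<le> (if \<bar>k\<bar> < N then 4 ^ J else 0) + (a * \<bar>C\<bar>) ^ (2 * J) * g (nat \<bar>k\<bar>)" for k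
    proof (cases "\<bar>k\<bar> < N")
      case True
      have "\<bar>\<kappa> k\<bar> ^ J \<le> 4 ^ J" using kap_abs[of k] by (intro power_mono) auto
      moreover have "0 \<le> (a * \<bar>C\<bar>) ^ (2 * J) * g (nat \<bar>k\<bar>)" using gnn unfolding a_def by simp
      ultimately show ?thesis using True by simp
    next
      case False
      define \<epsilon> where "\<epsilon> = lam k - real_of_int k"
      define p where "p = real (nat \<bar>k\<bar>) powr (- \<alpha>)"
      have p0: "0 \<le> p" unfolding p_def by simp
      have "\<bar>\<epsilon>\<bar> \<le> C * \<bar>real_of_int k\<bar> powr (- \<alpha>)" using H[of k] False unfolding \<epsilon>_def by simp
      also have "\<dots> = C * p" unfolding p_def by simp
      also have "\<dots> \<le> \<bar>C\<bar> * p" using p0 by (intro mult_right_mono) auto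
      finally have epsb: "\<bar>\<epsilon>\<bar> \<le> \<bar>C\<bar> * p" .
      have eqn: "a * lam k = a * \<epsilon> + (2 * pi) * of_int (int h * k)" unfolding \<epsilon>_def a_def by (simp add: algebra_simps)
      have "cos (a * lam k) = cos (a * \<epsilon>)" unfolding eqn cos_add cos_int_2pin sin_int_2pin by simp
      then have "\<kappa> k = 2 * cos (2 * (a * \<epsilon> / 2)) - 2" unfolding \<kappa>_def by simp
      also have "\<dots> = - 4 * sin (a * \<epsilon> / 2) ^ 2" unfolding cos_double_sin by simp
      finally have "\<bar>\<kappa> k\<bar> = 4 * sin (a * \<epsilon> / 2) ^ 2" by simp
      also have "\<dots> \<le> 4 * (a * \<epsilon> / 2) ^ 2"
      proof -
        have "sin (a * \<epsilon> / 2) ^ 2 \<le> (a * \<epsilon> / 2) ^ 2"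
          by (metis abs_sin_x_le_abs_x abs_ge_zero power2_abs power_mono)
        then show ?thesis by simp
      qed
      also have "\<dots> = (a * \<bar>\<epsilon>\<bar>) ^ 2" by (simp add: power2_eq_square)
      also have "\<dots> \<le> (a * (\<bar>C\<bar> * p)) ^ 2" using epsb unfolding a_def by (intro power_mono mult_left_mono) auto
      finally have "\<bar>\<kappa> k\<bar> ^ J \<le> ((a * (\<bar>C\<bar> * p)) ^ 2) ^ J" by (intro power_mono) auto
      also have "\<dots> = (a * (\<bar>C\<bar> * p)) ^ (2 * J)" by (simp only: power_mult)
      also have "\<dots> = (a * \<bar>C\<bar>) ^ (2 * J) * p ^ (2 * J)" by (simp only: power_mult_distrib mult.assoc)
      also have "p ^ (2 * J) = g (nat \<bar>k\<bar>)" unfolding g_def p_def by simp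
      finally show ?thesis using False by simp
    qed
    have sumb: "(\<Sum>k\<in>F x. \<bar>\<kappa> k\<bar> ^ J) \<le> 4 ^ J * M0 + (a * \<bar>C\<bar>) ^ (2 * J) * (2 * Z)" for x
    proof -
      have "(\<Sum>k\<in>F x. \<bar>\<kappa> k\<bar> ^ J) \<le> (\<Sum>k\<in>F x. (if \<bar>k\<bar> < N then 4 ^ J else 0) + (a * \<bar>C\<bar>) ^ (2 * J) * g (nat \<bar>k\<bar>))"
        by (rule sum_mono) (rule kb)
      also have "\<dots> = (\<Sum>k\<in>F x. (if k \<in> {k. \<bar>k\<bar> < N} then 4 ^ J else 0)) + (a * \<bar>C\<bar>) ^ (2 * J) * (\<Sum>k\<in>F x. g (nat \<bar>k\<bar>))"
        by (simp add: sum.distrib sum_distrib_left)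
      also have "(\<Sum>k\<in>F x. (if k \<in> {k. \<bar>k\<bar> < N} then 4 ^ J else 0)) = (\<Sum>k\<in>F x \<inter> {k. \<bar>k\<bar> < N}. (4::real) ^ J)"
        by (rule sum.inter_restrict[OF finF, symmetric])
      also have "\<dots> \<le> (\<Sum>k\<in>{k::int. \<bar>k\<bar> < N}. (4::real) ^ J)"
        by (rule sum_mono2[OF finN]) auto
      also have "\<dots> = 4 ^ J * M0" unfolding M0_def by simp
      also have "(\<Sum>k\<in>F x. g (nat \<bar>k\<bar>)) \<le> 2 * Z" unfolding Z_def by (rule int_sum_le[OF finF gnn gsum])
      then have "(a * \<bar>C\<bar>) ^ (2 * J) * (\<Sum>k\<in>F x. g (nat \<bar>k\<bar>)) \<le> (a * \<bar>C\<bar>) ^ (2 * J) * (2 * Z)"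
        unfolding a_def by (intro mult_left_mono) auto
      finally show ?thesis by simp
    qed
    have nb: "norm (Dop a J (S x) t) \<le> 2 * R0 * (4 ^ J * M0 + (a * \<bar>C\<bar>) ^ (2 * J) * (2 * Z))" for x
      using bound[of x] sumb[of x] R0nn by (meson mult_left_mono order_trans zero_le_mult_iff zero_le_numeral)
    have "norm (Dop a J f t) \<le> 2 * R0 * (4 ^ J * M0 + (a * \<bar>C\<bar>) ^ (2 * J) * (2 * Z))"
      by (rule tendsto_upperbound[OF tendsto_norm[OF lim]]) (use nb in auto)
    then have "\<bar>(exp a + exp (- a) - 2) ^ J * exp t\<bar> \<le> 2 * R0 * (4 ^ J * M0 + (a * \<bar>C\<bar>) ^ (2 * J) * (2 * Z))"
      unfolding Df norm_of_real .
    then show ?thesis unfolding a_def by linarith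
  qed
  have Z0: "0 \<le> Z" unfolding Z_def by (rule suminf_nonneg[OF gsum gnn])
  define E where "E = exp t"
  have E0: "0 < E" unfolding E_def by simp
  define K1 where "K1 = 2 * R0 * (4 ^ J * real M0)"
  define K2 where "K2 = 2 * R0 * (\<bar>C\<bar> ^ (2 * J) * (2 * Z))"
  have K1: "0 \<le> K1" unfolding K1_def using R0nn by simp
  have K2: "0 \<le> K2" unfolding K2_def using R0nn Z0 by simp
  define Q :: real where "Q = 2 ^ J * fact (2 * J + 1)"
  have Q0: "0 < Q" unfolding Q_def by simp
  define A0 where "A0 = Q * (K1 + K2) / E + 1"
  define h where "h = nat \<lceil>A0\<rceil> + 1"
  define a where "a = 2 * pi * real h"
  have h1: "h \<ge> 1" unfolding h_def by simp
  have hA: "A0 \<le> real h" unfolding h_def by linarith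
  have "1 * real h \<le> (2 * pi) * real h" by (rule mult_right_mono) (use pi_gt3 in auto)
  then have ah: "real h \<le> a" unfolding a_def by simp
  have "2 * pi * 1 \<le> 2 * pi * real h" by (intro mult_left_mono) (use h1 pi_gt3 in auto)
  then have a6: "6 \<le> a" unfolding a_def using pi_gt3 by linarith
  have a1: "1 \<le> a" using a6 by simp
  have kh: "(exp a + exp (- a) - 2) ^ J * E \<le> K1 + K2 * a ^ (2 * J)"
  proof -
    have "(exp a + exp (- a) - 2) ^ J * E \<le> 2 * R0 * (4 ^ J * M0 + (a * \<bar>C\<bar>) ^ (2 * J) * (2 * Z))"
      using key[OF h1] unfolding a_def E_def by simp
    also have "\<dots> = K1 + K2 * a ^ (2 * J)" unfolding K1_def K2_def by (simp add: power_mult_distrib algebra_simps)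
    finally show ?thesis .
  qed
  have ea4: "4 \<le> exp a" using exp_ge_add_one_self[of a] a6 by linarith
  have b1: "exp a / 2 \<le> exp a + exp (- a) - 2" using ea4 exp_gt_zero[of "- a"] by linarith
  have b2: "exp a / 2 ^ J \<le> (exp a / 2) ^ J"
  proof -
    have "exp a ^ 1 \<le> exp a ^ J" using ea4 Jge a6 by (intro power_increasing) auto
    then show ?thesis by (simp add: power_divide divide_right_mono)
  qed
  have b3: "a ^ (2 * J + 1) / fact (2 * J + 1) \<le> exp a" using exp_ge_pow_fact[of a "2 * J + 1"] a1 by linarith
  have "a ^ (2 * J + 1) * E / Q \<le> exp a / 2 ^ J * E"
  proof -
    have "a ^ (2 * J + 1) * E / Q = (a ^ (2 * J + 1) / fact (2 * J + 1)) / 2 ^ J * E"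
      unfolding Q_def by (simp add: field_simps)
    also have "\<dots> \<le> exp a / 2 ^ J * E" using b3 E0 by (intro mult_right_mono divide_right_mono) auto
    finally show ?thesis .
  qed
  also have "\<dots> \<le> (exp a / 2) ^ J * E" using b2 E0 by (intro mult_right_mono) auto
  also have "\<dots> \<le> (exp a + exp (- a) - 2) ^ J * E"
    using b1 E0 ea4 by (intro mult_right_mono power_mono) auto
  also have "\<dots> \<le> K1 + K2 * a ^ (2 * J)" by (rule kh)
  finally have c1: "a ^ (2 * J + 1) * E / Q \<le> K1 + K2 * a ^ (2 * J)" .
  have p1: "1 \<le> a ^ (2 * J)" using a1 by (simp add: one_le_power)
  have "Q * (K1 + K2) / E < a" using hA ah unfolding A0_def by linarith
  then have "K1 + K2 < a * E / Q" using E0 Q0 by (simp add: field_simps)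
  then have "(K1 + K2) * a ^ (2 * J) < (a * E / Q) * a ^ (2 * J)" using p1 by (intro mult_strict_right_mono) auto
  also have "(a * E / Q) * a ^ (2 * J) = a ^ (2 * J + 1) * E / Q" by (simp add: field_simps)
  finally have c2: "(K1 + K2) * a ^ (2 * J) < a ^ (2 * J + 1) * E / Q" .
  have "K1 \<le> K1 * a ^ (2 * J)" using K1 p1 by (simp add: mult_le_cancel_left1)
  then have "K1 + K2 * a ^ (2 * J) \<le> (K1 + K2) * a ^ (2 * J)" by (simp add: algebra_simps)
  then show False using c1 c2 by linarith
qed
end
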